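(* Let $(\phi_n^+)_{n\ge1}$ and $(\phi_n^-)_{n\ge1}$ be sequences of inner functions such that for every $r \in (0,1)$ there exist $\delta>0$ and $n_0$ with $|\phi_n^+(z) - i|\ge\delta$ and $|\phi_n^-(z)+i|\ge\delta$ for all $|z|\le r$ and $n\ge n_0$ (i.e., $\phi_n^+$ and $\phi_n^-$ are bounded away from $i$ and $-i$ respectively on $|z|\le r$ as $n\to\infty$). Then the product $$\prod_{n \geq 1} \frac{T(\phi_n^+)}{T(\phi_n^-)}$$ converges absolutely and locally uniformly on $\mathbb{D}$ if and only if $\sum_{n \geq 1} |\phi_n^+ - \phi_n^-|$ converges locally uniformly on $\mathbb{D}$.
   Context: $\mathbb{D}$ is the open unit disk. $T(z) = i\frac{1-iz}{1+iz}$ and $T(\phi)=T\circ\phi$. A product $\prod w_n$ of functions converges absolutely and locally uniformly on $\mathbb{D}$ if $\sum|1-w_n(z)|$ converges uniformly on compact subsets of $\mathbb{D}$. *)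

theory Defs
  imports "HOL-Analysis.Analysis"
begin

definition inner_function :: "(complex \<Rightarrow> complex) \<Rightarrow> bool" where
  "inner_function f \<longleftrightarrow>
     f holomorphic_on ball 0 1 \<and> bounded (f ` ball 0 1) \<and>
     (AE \<theta> in lborel. \<theta> \<in> {0..2*pi} \<longrightarrow>
        (\<exists>L. ((\<lambda>r. f (complex_of_real r * cis \<theta>)) \<longlongrightarrow> L) (at_left 1) \<and> norm L = 1))"

definition T :: "complex \<Rightarrow> complex" where
  "T z = \<i> * (1 - \<i> * z) / (1 + \<i> * z)"

definition loc_unif_series :: "(nat \<Rightarrow> complex \<Rightarrow> real) \<Rightarrow> bool" where
  "loc_unif_series u \<longleftrightarrow>
     (\<forall>K. compact K \<and> K \<subseteq> ball 0 1 \<longrightarrow>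
        uniformly_convergent_on K (\<lambda>N z. \<Sum>n\<in>{1..N}. u n z))"

definition prod_abs_loc_unif :: "(nat \<Rightarrow> complex \<Rightarrow> complex) \<Rightarrow> bool" where
  "prod_abs_loc_unif w \<longleftrightarrow> loc_unif_series (\<lambda>n z. norm (1 - w n z))"

end

theory Submission
  imports Defs "HOL-Complex_Analysis.Complex_Analysis" "HOL-Real_Asymp.Real_Asymp"
begin

lemma inner_le1:
  assumes inn: "inner_function f" and z: "norm z < 1"
  shows "norm (f z) \<le> 1"
proof -
  have holf: "f holomorphic_on ball 0 1" and bd: "bounded (f ` ball 0 1)"
   and ae: "AE \<theta> in lborel. \<theta> \<in> {0..2*pi} \<longrightarrow>
        (\<exists>L. ((\<lambda>r. f (complex_of_real r * cis \<theta>)) \<longlongrightarrow> L) (at_left 1) \<and> norm L = 1)"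
    using inn unfolding inner_function_def by auto
  have contf: "continuous_on (ball 0 1) f"
    using holf holomorphic_on_imp_continuous_on by blast
  obtain M where Mpos: "M > 0" and M: "\<And>w. w \<in> ball 0 1 \<Longrightarrow> norm (f w) \<le> M"
    using bd unfolding bounded_pos by auto
  obtain N where N: "{x \<in> space lborel. \<not> (x \<in> {0..2*pi} \<longrightarrow>
        (\<exists>L. ((\<lambda>r. f (complex_of_real r * cis x)) \<longlongrightarrow> L) (at_left 1) \<and> norm L = 1))} \<subseteq> N"
     "emeasure lborel N = 0" "N \<in> sets lborel"
    using AE_E[OF ae] by blast
  have negN: "negligible N"
  proof -
    have "N \<in> null_sets lborel" using N(2,3) by (simp add: null_sets_def)
    then have "N \<in> null_sets lebesgue" by (rule null_sets_completionI)
    then show ?thesis by (simp add: negligible_iff_null_sets)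
  qed
  have good: "\<exists>L. ((\<lambda>r. f (complex_of_real r * cis \<theta>)) \<longlongrightarrow> L) (at_left 1) \<and> norm L = 1"
    if "\<theta> \<in> {0..2*pi}" "\<theta> \<notin> N" for \<theta> using N(1) that by auto
  define \<rho> where "\<rho> = norm z"
  have \<rho>: "0 \<le> \<rho>" "\<rho> < 1" using z by (auto simp: \<rho>_def)
  define rr where "rr j = 1 - (1 - \<rho>) / (real j + 2)" for j :: nat
  have rr_lo: "(1+\<rho>)/2 \<le> rr j" for j
  proof -
    have "(1 - \<rho>) / (real j + 2) \<le> (1 - \<rho>) / 2"
      using \<rho> by (intro divide_left_mono) auto
    then show ?thesis unfolding rr_def by (simp add: field_simps)
  qed
  have rr_hi: "rr j < 1" for j
    using \<rho> unfolding rr_def by auto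
  have rr_lim: "rr \<longlonglongrightarrow> 1"
  proof -
    have "(\<lambda>j. (1 - \<rho>) / (real j + 2)) \<longlonglongrightarrow> 0"
      by real_asymp
    then have "(\<lambda>j. 1 - (1 - \<rho>) / (real j + 2)) \<longlonglongrightarrow> 1 - 0"
      by (intro tendsto_diff tendsto_const)
    then show ?thesis unfolding rr_def by simp
  qed
  have rr_at: "filterlim rr (at_left 1) sequentially"
    using rr_lim rr_hi by (intro tendsto_imp_filterlim_at_left) auto
  have rr_pos: "rr j > \<rho>" for j
  proof -
    have "(1 - \<rho>) / (real j + 2) < 1 - \<rho>" using \<rho> by (simp add: divide_less_eq)
    then show ?thesis unfolding rr_def by linarith
  qed
  have dist: "norm (complex_of_real r * cis \<theta> - z) \<ge> r - \<rho>" if "r \<ge> 0" for r \<theta>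
  proof -
    have "norm (complex_of_real r * cis \<theta>) - norm z \<le> norm (complex_of_real r * cis \<theta> - z)"
      by (rule norm_triangle_ineq2)
    then show ?thesis using that by (simp add: norm_mult \<rho>_def)
  qed
  have key: "norm (f z) ^ k \<le> 1 / (1 - \<rho>)" for k
  proof -
    define h where "h j \<theta> = (if \<theta> \<in> N then 0 else
        norm (f (complex_of_real (rr j) * cis \<theta>)) ^ k * rr j / norm (complex_of_real (rr j) * cis \<theta> - z))"
      for j \<theta>
    define g where "g \<theta> = (if \<theta> \<in> N then 0 else 1 / norm (cis \<theta> - z))" for \<theta>
    have hint: "h j integrable_on {0..2*pi}" and lower: "2*pi * norm (f z)^k \<le> integral {0..2*pi} (h j)" for j
    proof -
      define r where "r = rr j"
      have r: "\<rho> < r" "r < 1" "0 < r" using rr_pos rr_hi \<rho> by (auto simp: r_def intro: le_less_trans)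
      have sub: "cball 0 r \<subseteq> ball (0::complex) 1" using r by auto
      have hol: "(\<lambda>w. f w ^ k) holomorphic_on cball 0 r"
        by (intro holomorphic_on_power holomorphic_on_subset[OF holf sub])
      have "((\<lambda>w. f w ^ k / (w - z)) has_contour_integral (2 * of_real pi * \<i> * f z ^ k)) (circlepath 0 r)"
        using Cauchy_integral_circlepath_simple[OF hol, of z] r by (simp add: \<rho>_def)
      then have I: "((\<lambda>t. f (0 + r * cis t) ^ k / (0 + r * cis t - z) * r * \<i> * cis t) has_integral
            (2 * of_real pi * \<i> * f z ^ k)) {0..2*pi}"
        unfolding circlepath_def by (subst (asm) has_contour_integral_part_circlepath_iff) auto
      define F where "F t = f (complex_of_real r * cis t) ^ k / (complex_of_real r * cis t - z) * r * \<i> * cis t" for t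
      define G where "G t = norm (f (complex_of_real r * cis t)) ^ k * r / norm (complex_of_real r * cis t - z)" for t
      have I': "(F has_integral (2 * of_real pi * \<i> * f z ^ k)) {0..2*pi}"
        using I unfolding F_def by simp
      have nz: "complex_of_real r * cis t - z \<noteq> 0" for t
        using dist[of r t] r \<rho> by force
      have nz2: "z \<noteq> complex_of_real r * cis t" for t using nz[of t] by auto
      have img: "(\<lambda>t. complex_of_real r * cis t) ` {0..2*pi} \<subseteq> ball 0 1"
        using r by (auto simp: norm_mult)
      have contG: "continuous_on {0..2*pi} G"
        unfolding G_def
        by (intro continuous_intros continuous_on_compose2[OF contf _ img]) (auto simp: nz2)
      have GF: "norm (F t) = G t" for t
        using r by (simp add: F_def G_def norm_mult norm_divide norm_power)
      have Gint: "G integrable_on {0..2*pi}" by (rule integrable_continuous_interval[OF contG])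
      have heq: "t \<in> {0..2*pi} - N \<Longrightarrow> h j t = G t" for t
        by (simp add: h_def G_def r_def)
      show "h j integrable_on {0..2*pi}"
        by (rule integrable_spike[OF Gint negN heq])
      have "norm (2 * of_real pi * \<i> * f z ^ k) = norm (integral {0..2*pi} F)"
        using I' by (simp add: integral_unique)
      also have "\<dots> \<le> integral {0..2*pi} G"
        using I' Gint GF by (intro integral_norm_bound_integral) (auto simp: has_integral_integrable)
      also have "\<dots> = integral {0..2*pi} (h j)"
        by (rule integral_spike[OF negN]) (simp add: heq)
      finally show "2*pi * norm (f z)^k \<le> integral {0..2*pi} (h j)"
        by (simp add: norm_mult norm_power)
    qed
    define B where "B = M ^ k * (2 / (1 - \<rho>))"
    have bound: "norm (h j \<theta>) \<le> B" for j \<theta>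
    proof (cases "\<theta> \<in> N")
      case True then show ?thesis using Mpos \<rho> by (simp add: h_def B_def)
    next
      case False
      have r: "\<rho> < rr j" "rr j < 1" "(1+\<rho>)/2 \<le> rr j" using rr_pos rr_hi rr_lo by auto
      have inb: "complex_of_real (rr j) * cis \<theta> \<in> ball 0 1" using r \<rho> by (simp add: norm_mult)
      have d: "(1 - \<rho>)/2 \<le> norm (complex_of_real (rr j) * cis \<theta> - z)"
      proof -
        have "rr j - \<rho> \<le> norm (complex_of_real (rr j) * cis \<theta> - z)"
          using dist[of "rr j" \<theta>] r \<rho> by force
        then show ?thesis using r by (simp add: field_simps)
      qed
      have "norm (f (complex_of_real (rr j) * cis \<theta>)) ^ k \<le> M ^ k"
        using M[OF inb] by (intro power_mono) auto
      moreover have "rr j / norm (complex_of_real (rr j) * cis \<theta> - z) \<le> 2 / (1 - \<rho>)"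
      proof -
        have "rr j / norm (complex_of_real (rr j) * cis \<theta> - z) \<le> 1 / ((1 - \<rho>)/2)"
          using r \<rho> d by (intro frac_le) auto
        then show ?thesis by simp
      qed
      ultimately have "norm (f (complex_of_real (rr j) * cis \<theta>)) ^ k * (rr j / norm (complex_of_real (rr j) * cis \<theta> - z)) \<le> B"
        unfolding B_def using r \<rho> Mpos by (intro mult_mono) auto
      moreover have "0 \<le> rr j" using r \<rho> by linarith
      ultimately show ?thesis using False by (simp add: h_def abs_of_nonneg)
    qed
    have conv: "(\<lambda>j. h j \<theta>) \<longlonglongrightarrow> g \<theta>" if th: "\<theta> \<in> {0..2*pi}" for \<theta>
    proof (cases "\<theta> \<in> N")
      case True then show ?thesis by (simp add: h_def g_def)
    next
      case False
      obtain L where L: "((\<lambda>r. f (complex_of_real r * cis \<theta>)) \<longlongrightarrow> L) (at_left 1)" "norm L = 1"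
        using good[OF th False] by blast
      have l1: "(\<lambda>j. f (complex_of_real (rr j) * cis \<theta>)) \<longlonglongrightarrow> L"
        using filterlim_compose[OF L(1) rr_at] by (simp add: o_def)
      have l2: "(\<lambda>j. norm (f (complex_of_real (rr j) * cis \<theta>)) ^ k) \<longlonglongrightarrow> norm L ^ k"
        by (intro tendsto_intros l1)
      have nz: "cis \<theta> - z \<noteq> 0"
      proof
        assume "cis \<theta> - z = 0" then have "norm z = 1" by (metis eq_iff_diff_eq_0 norm_cis)
        then show False using z by simp
      qed
      have l3: "(\<lambda>j. complex_of_real (rr j) * cis \<theta> - z) \<longlonglongrightarrow> complex_of_real 1 * cis \<theta> - z"
        by (intro tendsto_intros rr_lim)
      have l4: "(\<lambda>j. norm (f (complex_of_real (rr j) * cis \<theta>)) ^ k * rr j / norm (complex_of_real (rr j) * cis \<theta> - z))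
           \<longlonglongrightarrow> norm L ^ k * 1 / norm (complex_of_real 1 * cis \<theta> - z)"
        using nz by (intro tendsto_intros l2 rr_lim l3) auto
      then show ?thesis using False L(2) by (simp add: h_def g_def)
    qed
    have Bint: "(\<lambda>_. B) integrable_on {0..2*pi}" by (intro integrable_continuous_interval continuous_on_const)
    have gint: "g integrable_on {0..2*pi}"
      and lim: "(\<lambda>j. integral {0..2*pi} (h j)) \<longlonglongrightarrow> integral {0..2*pi} g"
      using dominated_convergence[OF hint Bint bound conv] by auto
    have "2*pi * norm (f z)^k \<le> integral {0..2*pi} g"
      using lim lower by (intro LIMSEQ_le_const) auto
    also have "\<dots> \<le> integral {0..2*pi} (\<lambda>_. 1 / (1 - \<rho>))"
    proof (rule integral_le[OF gint])
      show "(\<lambda>_. 1 / (1 - \<rho>)) integrable_on {0..2*pi}" by (intro integrable_continuous_interval continuous_on_const)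
      fix \<theta> :: real
      have "1 - \<rho> \<le> norm (cis \<theta> - z)"
        using dist[of 1 \<theta>] by simp
      then show "g \<theta> \<le> 1 / (1 - \<rho>)"
        using \<rho> by (auto simp: g_def intro!: frac_le)
    qed
    also have "\<dots> = 2*pi * (1 / (1 - \<rho>))" by simp
    finally have "2*pi * norm (f z)^k \<le> 2*pi * (1 / (1 - \<rho>))" .
    then show ?thesis by (rule mult_left_le_imp_le) simp
  qed
  show ?thesis
  proof (rule ccontr)
    assume "\<not> ?thesis" then have "1 < norm (f z)" by simp
    from real_arch_pow[OF this, of "1 / (1 - \<rho>)"] obtain k where "1 / (1 - \<rho>) < norm (f z) ^ k" by blast
    with key[of k] show False by simp
  qed
qed

lemma T_diff:
  assumes "1 + \<i>*a \<noteq> 0" "1 + \<i>*b \<noteq> 0" "1 - \<i>*b \<noteq> 0"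
  shows "1 - T a / T b = 2*\<i>*(a-b)/((1+\<i>*a)*(1-\<i>*b))"
proof -
  have q: "T a / T b = ((1-\<i>*a)*(1+\<i>*b))/((1+\<i>*a)*(1-\<i>*b))"
    unfolding T_def using assms by (simp add: divide_simps mult_ac)
  have d: "(1+\<i>*a)*(1-\<i>*b) \<noteq> 0" using assms by simp
  have "1 - T a / T b = ((1+\<i>*a)*(1-\<i>*b) - (1-\<i>*a)*(1+\<i>*b))/((1+\<i>*a)*(1-\<i>*b))"
    unfolding q using d by (simp add: diff_divide_distrib)
  also have "(1+\<i>*a)*(1-\<i>*b) - (1-\<i>*a)*(1+\<i>*b) = 2*\<i>*(a-b)"
    by (simp add: algebra_simps)
  finally show ?thesis .
qed

lemma norm_1ia: "norm (1 + \<i>*a) = norm (a - \<i>)"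
proof -
  have "1 + \<i>*a = \<i> * (a - \<i>)" by (simp add: algebra_simps)
  then show ?thesis by (simp add: norm_mult)
qed

lemma norm_1ib: "norm (1 - \<i>*b) = norm (b + \<i>)"
proof -
  have "1 - \<i>*b = (-\<i>) * (b + \<i>)" by (simp add: algebra_simps)
  then show ?thesis by (simp add: norm_mult)
qed

lemma T_lower:
  assumes a: "norm a \<le> 1" and b: "norm b \<le> 1"
  shows "norm (a - b) \<le> 2 * norm (1 - T a / T b)"
proof -
  have ab: "norm (a - b) \<le> 2" using norm_triangle_ineq4[of a b] a b by linarith
  show ?thesis
  proof (cases "1 + \<i>*a = 0 \<or> 1 + \<i>*b = 0 \<or> 1 - \<i>*b = 0")
    case True
    then have "T a = 0 \<or> T b = 0" unfolding T_def by auto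
    then show ?thesis using ab by auto
  next
    case False
    then have nz: "1 + \<i>*a \<noteq> 0" "1 + \<i>*b \<noteq> 0" "1 - \<i>*b \<noteq> 0" by auto
    have d1: "norm (1 + \<i>*a) \<le> 2" unfolding norm_1ia using norm_triangle_ineq4[of a \<i>] a by simp
    have d2: "norm (1 - \<i>*b) \<le> 2" unfolding norm_1ib using norm_triangle_ineq[of b \<i>] b by simp
    have "norm (1 - T a / T b) = 2 * norm (a - b) / (norm (1+\<i>*a) * norm (1-\<i>*b))"
      unfolding T_diff[OF nz] by (simp add: norm_mult norm_divide)
    also have "\<dots> \<ge> 2 * norm (a - b) / (2 * 2)"
      using nz d1 d2 by (intro divide_left_mono mult_mono mult_pos_pos) auto
    finally show ?thesis by simp
  qed
qed

lemma T_upper: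
  assumes d: "\<delta> > 0" and a: "norm (a - \<i>) \<ge> \<delta>" and b: "norm (b + \<i>) \<ge> \<delta>"
  shows "norm (1 - T a / T b) \<le> 2 / \<delta>^2 * norm (a - b)"
proof (cases "b = \<i>")
  case True
  have "\<delta> \<le> 2" using b True by (simp add: norm_mult)
  have "T b = 0" using True unfolding T_def by simp
  then have "norm (1 - T a / T b) = 1" by simp
  also have "1 \<le> 2 / \<delta>^2 * \<delta>"
    using d \<open>\<delta> \<le> 2\<close> by (simp add: power2_eq_square field_simps)
  also have "\<dots> \<le> 2 / \<delta>^2 * norm (a - b)"
    using a True d by (intro mult_left_mono) auto
  finally show ?thesis .
next
  case False
  have nz: "1 + \<i>*a \<noteq> 0" "1 + \<i>*b \<noteq> 0" "1 - \<i>*b \<noteq> 0"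
  proof -
    show "1 + \<i>*a \<noteq> 0" using a d by (metis norm_1ia norm_zero not_less)
    show "1 - \<i>*b \<noteq> 0" using b d by (metis norm_1ib norm_zero not_less)
    show "1 + \<i>*b \<noteq> 0"
    proof
      assume "1 + \<i>*b = 0" then have "b = \<i>" by (metis norm_1ia norm_zero zero_less_norm_iff eq_iff_diff_eq_0 less_irrefl)
      then show False using False by simp
    qed
  qed
  have d1: "norm (1 + \<i>*a) \<ge> \<delta>" unfolding norm_1ia using a .
  have d2: "norm (1 - \<i>*b) \<ge> \<delta>" unfolding norm_1ib using b .
  have "norm (1 - T a / T b) = 2 * norm (a - b) / (norm (1+\<i>*a) * norm (1-\<i>*b))"
    unfolding T_diff[OF nz] by (simp add: norm_mult norm_divide)
  also have "\<dots> \<le> 2 * norm (a - b) / (\<delta> * \<delta>)"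
    using d d1 d2 by (intro divide_left_mono mult_mono mult_pos_pos) auto
  finally show ?thesis by (simp add: power2_eq_square)
qed

lemma sum_split_1:
  "m \<le> n \<Longrightarrow> sum f {1..n} = sum f {1..m} + sum f {Suc m..(n::nat)}"
proof (induction n)
  case 0 then show ?case by simp
next
  case (Suc n)
  show ?case
  proof (cases "m = Suc n")
    case True then show ?thesis by simp
  next
    case False
    then have "m \<le> n" using Suc.prems by simp
    then show ?thesis using Suc.IH by (simp add: add.assoc)
  qed
qed

lemma comp_series:
  fixes u v :: "nat \<Rightarrow> complex \<Rightarrow> real"
  assumes C: "C > 0"
    and le: "\<And>n z. n \<ge> n0 \<Longrightarrow> z \<in> K \<Longrightarrow> 0 \<le> u n z \<and> u n z \<le> C * v n z"
    and conv: "uniformly_convergent_on K (\<lambda>N z. \<Sum>n\<in>{1..N}. v n z)"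
  shows "uniformly_convergent_on K (\<lambda>N z. \<Sum>n\<in>{1..N}. u n z)"
proof -
  have cv: "uniformly_Cauchy_on K (\<lambda>N z. \<Sum>n\<in>{1..N}. v n z)"
    using conv uniformly_convergent_eq_Cauchy by blast
  have main: "\<bar>(\<Sum>n\<in>{1..n}. u n z) - (\<Sum>n\<in>{1..m}. u n z)\<bar> \<le>
       C * \<bar>(\<Sum>n\<in>{1..n}. v n z) - (\<Sum>n\<in>{1..m}. v n z)\<bar>"
    if "n0 \<le> m" "m \<le> n" "z \<in> K" for m n z
  proof -
    have su: "(\<Sum>n\<in>{1..n}. u n z) - (\<Sum>n\<in>{1..m}. u n z) = (\<Sum>n\<in>{Suc m..n}. u n z)"
      using sum_split_1[OF \<open>m \<le> n\<close>, of "\<lambda>n. u n z"] by simp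
    have sv: "(\<Sum>n\<in>{1..n}. v n z) - (\<Sum>n\<in>{1..m}. v n z) = (\<Sum>n\<in>{Suc m..n}. v n z)"
      using sum_split_1[OF \<open>m \<le> n\<close>, of "\<lambda>n. v n z"] by simp
    have "\<bar>\<Sum>n\<in>{Suc m..n}. u n z\<bar> = (\<Sum>n\<in>{Suc m..n}. u n z)"
      using le that by (intro abs_of_nonneg sum_nonneg) auto
    also have "\<dots> \<le> (\<Sum>n\<in>{Suc m..n}. C * v n z)"
      using le that by (intro sum_mono) auto
    also have "\<dots> = C * (\<Sum>n\<in>{Suc m..n}. v n z)" by (simp add: sum_distrib_left)
    also have "\<dots> \<le> C * \<bar>\<Sum>n\<in>{Suc m..n}. v n z\<bar>" using C by (intro mult_left_mono) auto
    finally show ?thesis using su sv by simp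
  qed
  show ?thesis
    unfolding uniformly_convergent_eq_Cauchy uniformly_Cauchy_on_def
  proof (intro allI impI)
    fix e :: real assume e: "e > 0"
    then obtain M where M: "\<And>x m n. x \<in> K \<Longrightarrow> m \<ge> M \<Longrightarrow> n \<ge> M \<Longrightarrow>
        dist (\<Sum>n\<in>{1..m}. v n x) (\<Sum>n\<in>{1..n}. v n x) < e / C"
      using cv C unfolding uniformly_Cauchy_on_def by (meson divide_pos_pos)
    have "dist (\<Sum>n\<in>{1..m}. u n x) (\<Sum>n\<in>{1..n}. u n x) < e"
      if x: "x \<in> K" and m: "m \<ge> max M n0" and n: "n \<ge> max M n0" for x m n
    proof -
      have *: "\<bar>(\<Sum>n\<in>{1..n}. u n x) - (\<Sum>n\<in>{1..m}. u n x)\<bar> < e"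
        if "n0 \<le> m" "m \<le> n" "m \<ge> M" "n \<ge> M" for m n
      proof -
        have "\<bar>(\<Sum>n\<in>{1..n}. u n x) - (\<Sum>n\<in>{1..m}. u n x)\<bar> \<le>
           C * \<bar>(\<Sum>n\<in>{1..n}. v n x) - (\<Sum>n\<in>{1..m}. v n x)\<bar>"
          using main that x by blast
        also have "\<dots> < C * (e / C)"
          using M[OF x \<open>n \<ge> M\<close> \<open>m \<ge> M\<close>] C by (intro mult_strict_left_mono) (auto simp: dist_real_def)
        finally show ?thesis using C by simp
      qed
      show ?thesis
      proof (cases "m \<le> n")
        case True then show ?thesis using *[of m n] m n by (auto simp: dist_real_def abs_minus_commute)
      next
        case False then show ?thesis using *[of n m] m n by (auto simp: dist_real_def)
      qed
    qed
    then show "\<exists>M. \<forall>x\<in>K. \<forall>m\<ge>M. \<forall>n\<ge>M. dist (\<Sum>n\<in>{1..m}. u n x) (\<Sum>n\<in>{1..n}. u n x) < e"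
      by blast
  qed
qed

lemma compact_in_disk:
  assumes "compact K" "K \<subseteq> ball (0::complex) 1"
  shows "\<exists>r. 0 < r \<and> r < 1 \<and> (\<forall>z\<in>K. norm z \<le> r)"
proof (cases "K = {}")
  case True then show ?thesis by (intro exI[of _ "1/2"]) auto
next
  case False
  obtain x where x: "x \<in> K" "\<And>y. y \<in> K \<Longrightarrow> norm y \<le> norm x"
    using continuous_attains_sup[OF assms(1) False, of norm] continuous_on_norm_id by blast
  have "norm x < 1" using x assms(2) by auto
  then show ?thesis using x by (intro exI[of _ "max (1/2) (norm x)"]) (auto simp: le_max_iff_disj)
qed

theorem theorem6p6:
  fixes phip phim :: "nat \<Rightarrow> complex \<Rightarrow> complex"
  assumes inner_p: "\<And>n. n \<ge> 1 \<Longrightarrow> inner_function (phip n)"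
    and inner_m: "\<And>n. n \<ge> 1 \<Longrightarrow> inner_function (phim n)"
    and away: "\<And>r. 0 < r \<Longrightarrow> r < 1 \<Longrightarrow>
       \<exists>\<delta>>0. \<exists>n0. \<forall>n\<ge>n0. \<forall>z. norm z \<le> r \<longrightarrow>
          norm (phip n z - \<i>) \<ge> \<delta> \<and> norm (phim n z + \<i>) \<ge> \<delta>"
  shows "prod_abs_loc_unif (\<lambda>n z. T (phip n z) / T (phim n z))
     \<longleftrightarrow> loc_unif_series (\<lambda>n z. norm (phip n z - phim n z))"
  unfolding prod_abs_loc_unif_def loc_unif_series_def
proof (intro iffI allI impI)
  fix K :: "complex set"
  assume H: "\<forall>K. compact K \<and> K \<subseteq> ball 0 1 \<longrightarrow>
      uniformly_convergent_on K (\<lambda>N z. \<Sum>n = 1..N. norm (1 - T (phip n z) / T (phim n z)))"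
    and K: "compact K \<and> K \<subseteq> ball 0 1"
  show "uniformly_convergent_on K (\<lambda>N z. \<Sum>n = 1..N. norm (phip n z - phim n z))"
  proof (rule comp_series[of 2 1])
    show "uniformly_convergent_on K (\<lambda>N z. \<Sum>n = 1..N. norm (1 - T (phip n z) / T (phim n z)))"
      using H K by blast
    fix n :: nat and z :: complex assume n: "1 \<le> n" and z: "z \<in> K"
    have zn: "norm z < 1" using z K by auto
    show "0 \<le> norm (phip n z - phim n z) \<and> norm (phip n z - phim n z) \<le> 2 * norm (1 - T (phip n z) / T (phim n z))"
      using T_lower[OF inner_le1[OF inner_p[OF n] zn] inner_le1[OF inner_m[OF n] zn]] by simp
  qed simp
next
  fix K :: "complex set"
  assume H: "\<forall>K. compact K \<and> K \<subseteq> ball 0 1 \<longrightarrow>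
      uniformly_convergent_on K (\<lambda>N z. \<Sum>n = 1..N. norm (phip n z - phim n z))"
    and K: "compact K \<and> K \<subseteq> ball 0 1"
  obtain r where r: "0 < r" "r < 1" "\<And>z. z \<in> K \<Longrightarrow> norm z \<le> r"
    using compact_in_disk[of K] K by blast
  obtain \<delta> n0 where d: "\<delta> > 0" and dn: "\<And>n z. n \<ge> n0 \<Longrightarrow> norm z \<le> r \<Longrightarrow>
          norm (phip n z - \<i>) \<ge> \<delta> \<and> norm (phim n z + \<i>) \<ge> \<delta>"
    using away[OF r(1,2)] by blast
  show "uniformly_convergent_on K (\<lambda>N z. \<Sum>n = 1..N. norm (1 - T (phip n z) / T (phim n z)))"
  proof (rule comp_series[of "2 / \<delta>^2" n0])
    show "uniformly_convergent_on K (\<lambda>N z. \<Sum>n = 1..N. norm (phip n z - phim n z))"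
      using H K by blast
    show "0 < 2 / \<delta>^2" using d by simp
    fix n :: nat and z :: complex assume n: "n0 \<le> n" and z: "z \<in> K"
    have "norm (phip n z - \<i>) \<ge> \<delta>" "norm (phim n z + \<i>) \<ge> \<delta>"
      using dn[OF n r(3)[OF z]] by auto
    then show "0 \<le> norm (1 - T (phip n z) / T (phim n z)) \<and>
        norm (1 - T (phip n z) / T (phim n z)) \<le> 2 / \<delta>^2 * norm (phip n z - phim n z)"
      using T_upper[OF d] by simp
  qed
qed

end
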